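(* Frame equivalence is not compositional in general: there exists a psi-calculus (satisfying all the requisites below) with frames $F,G,H$ such that $F\simeq G$ but not $F\otimes H\simeq G\otimes H$.
   Context: Names: a countably infinite set $\mathcal N$ of atomic names. A nominal set is a set equipped with name swapping operations $(a\;b)\cdot X$; the support $\mathrm n(X)$ is the set of names affected by swappings, assumed finite; $a\#X$ means $a\notin\mathrm n(X)$. Psi-calculus: given by three nominal datatypes $\mathbf T$ (terms), $\mathbf C$ (conditions, $\varphi$), $\mathbf A$ (assertions, $\Psi$), equivariant operators $\leftrightarrow:\mathbf T\times\mathbf T\to\mathbf C$, $\otimes:\mathbf A\times\mathbf A\to\mathbf A$, $\mathbf 1\in\mathbf A$, $\vdash\subseteq\mathbf A\times\mathbf C$, and equivariant substitution functions $X[\tilde a:=\tilde T]$ on $\mathbf T,\mathbf C,\mathbf A$ satisfying: (S1) if $\tilde a\subseteq\mathrm n(X)$ and $b\in\mathrm n(\tilde T)$ then $b\in\mathrm n(X[\tilde a:=\tilde T])$; (S2) if $\tilde b\# X,\tilde a$ then $X[\tilde a:=\tilde T]=((\tilde b\;\tilde a)\cdot X)[\tilde b:=\tilde T]$. $\Psi\simeq\Psi'$ iff for all $\varphi$: $\Psi\vdash\varphi\iff\Psi'\vdash\varphi$. Required: $\Psi\vdash M\leftrightarrow N\Rightarrow\Psi\vdash N\leftrightarrow M$; $\Psi\vdash M\leftrightarrow N\wedge\Psi\vdash N\leftrightarrow L\Rightarrow\Psi\vdash M\leftrightarrow L$; $\Psi\simeq\Psi'\Rightarrow\Psi\otimes\Psi''\simeq\Psi'\otimes\Psi''$;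 $\Psi\otimes\mathbf 1\simeq\Psi$; $(\Psi\otimes\Psi')\otimes\Psi''\simeq\Psi\otimes(\Psi'\otimes\Psi'')$; $\Psi\otimes\Psi'\simeq\Psi'\otimes\Psi$. Frames: $(\nu\tilde b)\Psi$ with the name sequence $\tilde b$ binding into $\Psi$, identified up to alpha-equivalence; $(\nu\tilde b_1)\Psi_1\otimes(\nu\tilde b_2)\Psi_2=(\nu\tilde b_1\tilde b_2)(\Psi_1\otimes\Psi_2)$ where $\tilde b_1\#\tilde b_2,\Psi_2$ and $\tilde b_2\#\tilde b_1,\Psi_1$; $F\vdash\varphi$ iff some alpha-variant $(\nu\tilde b)\Psi$ of $F$ has $\tilde b\#\varphi$ and $\Psi\vdash\varphi$; $F\simeq G$ iff for all $\varphi$, $F\vdash\varphi\iff G\vdash\varphi$; an assertion $\Psi$ is identified with the frame $(\nu\epsilon)\Psi$. *)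

theory Defs
  imports Main
begin

type_synonym name = nat

type_synonym 'x swapping = "name \<Rightarrow> name \<Rightarrow> 'x \<Rightarrow> 'x"

definition swp :: "name \<Rightarrow> name \<Rightarrow> name \<Rightarrow> name" where
  "swp a b c = (if c = a then b else if c = b then a else c)"

definition supp :: "'x swapping \<Rightarrow> 'x \<Rightarrow> name set" where
  "supp sw x = {a. infinite {b. sw a b x \<noteq> x}}"

definition supp_list :: "'x swapping \<Rightarrow> 'x list \<Rightarrow> name set" where
  "supp_list sw xs = (\<Union>x\<in>set xs. supp sw x)"

definition nominal_set :: "'x swapping \<Rightarrow> bool" where
  "nominal_set sw \<longleftrightarrow>
     (\<forall>a x. sw a a x = x) \<and>
     (\<forall>a b x. sw a b (sw a b x) = x) \<and>
     (\<forall>a b x. sw a b x = sw b a x) \<and>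
     (\<forall>a b c d x. sw a b (sw c d x) = sw (swp a b c) (swp a b d) (sw a b x)) \<and>
     (\<forall>x. finite (supp sw x))"

definition swap_seq :: "'x swapping \<Rightarrow> name list \<Rightarrow> name list \<Rightarrow> 'x \<Rightarrow> 'x" where
  "swap_seq sw bs as x = foldr (\<lambda>(b, a) y. sw b a y) (zip bs as) x"

record ('t, 'c, 'a) psi_data =
  swT :: "'t swapping"
  swC :: "'c swapping"
  swA :: "'a swapping"
  chan :: "'t \<Rightarrow> 't \<Rightarrow> 'c"
  comp :: "'a \<Rightarrow> 'a \<Rightarrow> 'a"
  unitA :: "'a"
  ent :: "'a \<Rightarrow> 'c \<Rightarrow> bool"
  substT :: "'t \<Rightarrow> name list \<Rightarrow> 't list \<Rightarrow> 't"
  substC :: "'c \<Rightarrow> name list \<Rightarrow> 't list \<Rightarrow> 'c"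
  substA :: "'a \<Rightarrow> name list \<Rightarrow> 't list \<Rightarrow> 'a"

definition subst_axioms ::
  "'t swapping \<Rightarrow> 'x swapping \<Rightarrow> ('x \<Rightarrow> name list \<Rightarrow> 't list \<Rightarrow> 'x) \<Rightarrow> bool" where
  "subst_axioms sT sX sub \<longleftrightarrow>
     (\<forall>a b X as Ts. sX a b (sub X as Ts) = sub (sX a b X) (map (swp a b) as) (map (sT a b) Ts)) \<and>
     (\<forall>X as Ts b. distinct as \<and> length as = length Ts \<and> set as \<subseteq> supp sX X
        \<and> b \<in> supp_list sT Ts \<longrightarrow> b \<in> supp sX (sub X as Ts)) \<and>
     (\<forall>X as bs Ts. distinct as \<and> distinct bs \<and> length as = length Ts \<and> length bs = length as
        \<and> set bs \<inter> (supp sX X \<union> set as) = {}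
        \<longrightarrow> sub X as Ts = sub (swap_seq sX bs as X) bs Ts)"

definition assn_equiv :: "('t, 'c, 'a) psi_data \<Rightarrow> 'a \<Rightarrow> 'a \<Rightarrow> bool" where
  "assn_equiv P \<Psi> \<Psi>' \<longleftrightarrow> (\<forall>\<phi>. ent P \<Psi> \<phi> \<longleftrightarrow> ent P \<Psi>' \<phi>)"

definition psi_calculus :: "('t, 'c, 'a) psi_data \<Rightarrow> bool" where
  "psi_calculus P \<longleftrightarrow>
     nominal_set (swT P) \<and> nominal_set (swC P) \<and> nominal_set (swA P) \<and>
     (\<forall>a b M N. swC P a b (chan P M N) = chan P (swT P a b M) (swT P a b N)) \<and>
     (\<forall>a b \<Psi> \<Psi>'. swA P a b (comp P \<Psi> \<Psi>') = comp P (swA P a b \<Psi>) (swA P a b \<Psi>')) \<and>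
     (\<forall>a b. swA P a b (unitA P) = unitA P) \<and>
     (\<forall>a b \<Psi> \<phi>. ent P \<Psi> \<phi> \<longleftrightarrow> ent P (swA P a b \<Psi>) (swC P a b \<phi>)) \<and>
     subst_axioms (swT P) (swT P) (substT P) \<and>
     subst_axioms (swT P) (swC P) (substC P) \<and>
     subst_axioms (swT P) (swA P) (substA P) \<and>
     (\<forall>\<Psi> M N. ent P \<Psi> (chan P M N) \<longrightarrow> ent P \<Psi> (chan P N M)) \<and>
     (\<forall>\<Psi> M N L. ent P \<Psi> (chan P M N) \<and> ent P \<Psi> (chan P N L) \<longrightarrow> ent P \<Psi> (chan P M L)) \<and>
     (\<forall>\<Psi> \<Psi>' \<Psi>''. assn_equiv P \<Psi> \<Psi>' \<longrightarrow> assn_equiv P (comp P \<Psi> \<Psi>'') (comp P \<Psi>' \<Psi>'')) \<and>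
     (\<forall>\<Psi>. assn_equiv P (comp P \<Psi> (unitA P)) \<Psi>) \<and>
     (\<forall>\<Psi> \<Psi>' \<Psi>''. assn_equiv P (comp P (comp P \<Psi> \<Psi>') \<Psi>'') (comp P \<Psi> (comp P \<Psi>' \<Psi>''))) \<and>
     (\<forall>\<Psi> \<Psi>'. assn_equiv P (comp P \<Psi> \<Psi>') (comp P \<Psi>' \<Psi>))"

text \<open>A frame (nu bs) Psi is represented by the pair (bs, Psi); bs is a sequence of
  nested binders (nu b1)(nu b2)...(nu bn) Psi. Frames are identified up to
  alpha-equivalence, generated by renaming one binder b to a name c that is fresh
  for the abstraction body (nu rest) Psi.\<close>
type_synonym 'a frame = "name list \<times> 'a"

definition alpha_step :: "'a swapping \<Rightarrow> 'a frame \<Rightarrow> 'a frame \<Rightarrow> bool" where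
  "alpha_step sA F F' \<longleftrightarrow>
     (\<exists>pre b rest c. fst F = pre @ b # rest \<and> c \<notin> supp sA (snd F) - set rest \<and>
        F' = (pre @ c # map (swp c b) rest, sA c b (snd F)))"

definition frame_alpha :: "'a swapping \<Rightarrow> 'a frame \<Rightarrow> 'a frame \<Rightarrow> bool" where
  "frame_alpha sA = equivclp (alpha_step sA)"

definition frame_ent :: "('t, 'c, 'a) psi_data \<Rightarrow> 'a frame \<Rightarrow> 'c \<Rightarrow> bool" where
  "frame_ent P F \<phi> \<longleftrightarrow>
     (\<exists>bs \<Psi>. frame_alpha (swA P) F (bs, \<Psi>) \<and> set bs \<inter> supp (swC P) \<phi> = {} \<and> ent P \<Psi> \<phi>)"

definition frame_equiv :: "('t, 'c, 'a) psi_data \<Rightarrow> 'a frame \<Rightarrow> 'a frame \<Rightarrow> bool" where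
  "frame_equiv P F G \<longleftrightarrow> (\<forall>\<phi>. frame_ent P F \<phi> \<longleftrightarrow> frame_ent P G \<phi>)"

definition frame_comp_ok :: "('t, 'c, 'a) psi_data \<Rightarrow> 'a frame \<Rightarrow> 'a frame \<Rightarrow> bool" where
  "frame_comp_ok P F G \<longleftrightarrow>
     set (fst F) \<inter> set (fst G) = {} \<and>
     set (fst F) \<inter> supp (swA P) (snd G) = {} \<and>
     set (fst G) \<inter> supp (swA P) (snd F) = {}"

definition frame_comp :: "('t, 'c, 'a) psi_data \<Rightarrow> 'a frame \<Rightarrow> 'a frame \<Rightarrow> 'a frame" where
  "frame_comp P F G = (fst F @ fst G, comp P (snd F) (snd G))"

end

theory Submission
  imports Defs
begin

definition sw :: "name list swapping" where
  "sw a b xs = map (swp a b) xs"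

lemma swp_inv[simp]: "swp a b (swp a b x) = x"
  by (simp add: swp_def)

lemma swp_inj: "inj (swp a b)"
  by (metis injI swp_inv)

lemma supp_sw: "supp sw xs = set xs"
proof (rule set_eqI, rule iffI)
  fix a assume "a \<in> supp sw xs"
  hence inf: "infinite {b. map (swp a b) xs \<noteq> xs}" by (simp add: supp_def sw_def)
  show "a \<in> set xs"
  proof (rule ccontr)
    assume na: "a \<notin> set xs"
    have "{b. map (swp a b) xs \<noteq> xs} \<subseteq> set xs"
    proof
      fix b assume "b \<in> {b. map (swp a b) xs \<noteq> xs}"
      hence "map (swp a b) xs \<noteq> xs" by simp
      moreover have "b \<notin> set xs \<Longrightarrow> map (swp a b) xs = xs"
        by (rule map_idI) (use na in \<open>auto simp: swp_def\<close>)
      ultimately show "b \<in> set xs" by blast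
    qed
    thus False using inf finite_subset by blast
  qed
next
  fix a assume a: "a \<in> set xs"
  have "- set xs \<subseteq> {b. map (swp a b) xs \<noteq> xs}"
  proof
    fix b assume "b \<in> - set xs"
    hence b: "b \<notin> set xs" by simp
    have "b \<in> set (map (swp a b) xs)" using a by (force simp: swp_def)
    thus "b \<in> {b. map (swp a b) xs \<noteq> xs}" using b by (metis mem_Collect_eq)
  qed
  moreover have "infinite (- set xs)"
    using finite_compl[of "set xs"] infinite_UNIV_nat by auto
  ultimately have "infinite {b. map (swp a b) xs \<noteq> xs}"
    using infinite_super by blast
  thus "a \<in> supp sw xs" by (simp add: supp_def sw_def)
qed

lemma swp_aa: "swp a a = id"
  by (auto simp: swp_def)

lemma swp_comp: "swp a b \<circ> swp a b = id"
  by (auto simp: swp_def)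

lemma swp_conj: "swp a b (swp c d y) = swp (swp a b c) (swp a b d) (swp a b y)"
  unfolding swp_def by (simp split: if_split)

lemma swp_sym: "swp a b = swp b a"
  by (auto simp: swp_def)

lemma nominal_sw: "nominal_set sw"
  unfolding nominal_set_def supp_sw
  by (simp add: sw_def swp_aa swp_comp swp_sym comp_def swp_conj[symmetric] del: swp_inv)

definition entl :: "name list \<Rightarrow> name list \<Rightarrow> bool" where
  "entl \<Psi> \<phi> \<longleftrightarrow> (\<phi> \<noteq> [] \<and> set \<phi> = set \<Psi>) \<or> (\<phi> = [] \<and> 2 \<le> card (set \<Psi>))"

definition sub :: "name list \<Rightarrow> name list \<Rightarrow> name list list \<Rightarrow> name list" where
  "sub X as Ts = concat Ts"

definition PP :: "(name list, name list, name list) psi_data" where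
  "PP = \<lparr>swT = sw, swC = sw, swA = sw, chan = (\<lambda>M N. []), comp = (@), unitA = [],
        ent = entl, substT = sub, substC = sub, substA = sub\<rparr>"

lemma subst_ok: "subst_axioms sw sw sub"
  unfolding subst_axioms_def sub_def supp_list_def supp_sw
  by (auto simp: sw_def[abs_def] map_concat)

lemma set_assn: "set \<Psi> = set \<Psi>' \<Longrightarrow> assn_equiv PP \<Psi> \<Psi>'"
  by (simp add: assn_equiv_def PP_def entl_def)

lemma ent_eqv: "entl \<Psi> \<phi> \<longleftrightarrow> entl (sw a b \<Psi>) (sw a b \<phi>)"
proof -
  have i: "inj (swp a b)" by (rule swp_inj)
  have "(swp a b ` set \<phi> = swp a b ` set \<Psi>) = (set \<phi> = set \<Psi>)"
    using i by (simp add: inj_image_eq_iff)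
  moreover have "card (swp a b ` set \<Psi>) = card (set \<Psi>)"
    using i by (simp add: card_image inj_on_def inj_eq)
  ultimately show ?thesis by (simp add: entl_def sw_def)
qed

lemma psi_PP: "psi_calculus PP"
proof -
  have a: "\<forall>\<Psi> \<Psi>' \<Psi>''. assn_equiv PP \<Psi> \<Psi>' \<longrightarrow> assn_equiv PP (\<Psi> @ \<Psi>'') (\<Psi>' @ \<Psi>'')"
  proof (intro allI impI)
    fix \<Psi> \<Psi>' \<Psi>'' assume "assn_equiv PP \<Psi> \<Psi>'"
    hence "entl \<Psi> \<Psi> = entl \<Psi>' \<Psi>" "entl \<Psi> \<Psi>' = entl \<Psi>' \<Psi>'"
      by (auto simp: assn_equiv_def PP_def)
    hence "set \<Psi> = set \<Psi>'" by (auto simp: entl_def)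
    thus "assn_equiv PP (\<Psi> @ \<Psi>'') (\<Psi>' @ \<Psi>'')" by (intro set_assn) simp
  qed
  have b: "\<forall>\<Psi>. assn_equiv PP (\<Psi> @ []) \<Psi>" by (simp add: set_assn)
  have c: "\<forall>\<Psi> \<Psi>' \<Psi>''. assn_equiv PP ((\<Psi> @ \<Psi>') @ \<Psi>'') (\<Psi> @ (\<Psi>' @ \<Psi>''))"
    by (simp add: set_assn)
  have d: "\<forall>\<Psi> \<Psi>'. assn_equiv PP (\<Psi> @ \<Psi>') (\<Psi>' @ \<Psi>)"
    by (intro allI set_assn) auto
  have e: "\<forall>a b \<Psi> \<phi>. entl \<Psi> \<phi> \<longleftrightarrow> entl (sw a b \<Psi>) (sw a b \<phi>)"
    using ent_eqv by blast
  show ?thesis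
    unfolding psi_calculus_def
    using a b c d e nominal_sw subst_ok
    by (simp add: PP_def sw_def)
qed

definition fnm :: "name list frame \<Rightarrow> name set" where
  "fnm F = set (snd F) - set (fst F)"

lemma step_inv:
  assumes "alpha_step sw F F'"
  shows "fnm F' = fnm F \<and> card (set (snd F')) = card (set (snd F))"
proof -
  obtain pre b rest c where f: "fst F = pre @ b # rest" and c: "c \<notin> set (snd F) - set rest"
    and F': "F' = (pre @ c # map (swp c b) rest, map (swp c b) (snd F))"
    using assms unfolding alpha_step_def supp_sw sw_def by blast
  have "card (set (snd F')) = card (set (snd F))"
    using F' swp_inj[of c b] by (simp add: card_image inj_on_def inj_eq)
  moreover have "fnm F' = fnm F"
    using c unfolding fnm_def F' f
    by (auto simp: swp_def split: if_splits)
  ultimately show ?thesis by simp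
qed

lemma alpha_inv:
  assumes "frame_alpha sw F F'"
  shows "fnm F' = fnm F \<and> card (set (snd F')) = card (set (snd F))"
  using assms unfolding frame_alpha_def
proof (induction rule: equivclp_induct)
  case base then show ?case by simp
next
  case (step y z)
  then show ?case using step_inv by metis
qed

lemma PP_simps[simp]: "swA PP = sw" "swC PP = sw" "ent PP = entl" "comp PP = (@)"
  by (simp_all add: PP_def)

lemma no_ent:
  assumes "set (snd F) \<subseteq> set (fst F)" "card (set (snd F)) < 2"
  shows "\<not> frame_ent PP F \<phi>"
proof
  assume "frame_ent PP F \<phi>"
  then obtain bs \<Psi> where a: "frame_alpha sw F (bs, \<Psi>)" and fr: "set bs \<inter> set \<phi> = {}"
    and e: "entl \<Psi> \<phi>"
    unfolding frame_ent_def by (auto simp: supp_sw)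
  from alpha_inv[OF a] assms have "set \<Psi> \<subseteq> set bs" "card (set \<Psi>) < 2"
    by (auto simp: fnm_def)
  thus False using e fr unfolding entl_def
    by (metis Int_absorb1 Int_commute empty_iff inf.absorb_iff2 le_iff_inf less_2_cases_iff
        list.set_sel(1) not_less)
qed

theorem mainTheorem10:
  shows "\<exists>P :: (name list, name list, name list) psi_data. psi_calculus P \<and>
    (\<exists>F G H. frame_comp_ok P F H \<and> frame_comp_ok P G H \<and>
       frame_equiv P F G \<and> \<not> frame_equiv P (frame_comp P F H) (frame_comp P G H))"
proof (intro exI conjI)
  show "psi_calculus PP" by (rule psi_PP)
  show "frame_comp_ok PP ([0], [0]) ([1], [1])"
    by (simp add: frame_comp_ok_def supp_sw)
  show "frame_comp_ok PP ([], []) ([1], [1])"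
    by (simp add: frame_comp_ok_def supp_sw)
  show "frame_equiv PP ([0], [0]) ([], [])"
    unfolding frame_equiv_def using no_ent[of "([0],[0])"] no_ent[of "([],[])"] by simp
  have "frame_ent PP (frame_comp PP ([0], [0]) ([1], [1])) []"
    unfolding frame_ent_def frame_comp_def
    by (rule exI[of _ "[0,1]"], rule exI[of _ "[0,1]"])
       (simp add: frame_alpha_def supp_sw entl_def)
  moreover have "\<not> frame_ent PP (frame_comp PP ([], []) ([1], [1])) []"
    by (rule no_ent) (simp_all add: frame_comp_def)
  ultimately show "\<not> frame_equiv PP (frame_comp PP ([0], [0]) ([1], [1])) (frame_comp PP ([], []) ([1], [1]))"
    unfolding frame_equiv_def by blast
qed

end
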